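(* Let $n\ge0$ and let $a_1,\dots,a_{n+1},b_1,\dots,b_n$ be nonzero integers; let $s=[2a_1,2b_1,2a_2,2b_2,\dots,2a_n,2b_n,2a_{n+1}]$, let $k\ne0$ be an integer, and let $$r=[2a_1,2b_1,\dots,2b_n,2a_{n+1},\,2k,\,-2a_{n+1},-2b_n,\dots,-2b_1,-2a_1].$$ Then $K(s)$ and $K(r)$ are 2-component 2-bridge links, and their two-variable Alexander polynomials satisfy $$\Delta_{K(r)}(x,y)=\varepsilon\,x^iy^j\,k\,(x-1)(y-1)\,\big[\Delta_{K(s)}(x,y)\big]^2$$ for some $\varepsilon\in\{\pm1\}$ and integers $i,j$. Consequently $\Delta_{K(r)}(x,y)$ has no zero $(x,y)$ with $\operatorname{Im}x>0$ and $\operatorname{Im}y>0$ if and only if the same holds for $\Delta_{K(s)}(x,y)$.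
   Context: Two-variable Alexander polynomial convention: for $m\in\mathbb Z$ put $G_m=\frac{x^m-y^m}{x-y}$ for $m>0$, $G_0=0$, $G_{-m}=-(xy)^{-m}G_m$ for $m>0$. For $s=[2a_1,2b_1,\dots,2a_N,2b_N,2a_{N+1}]$ the two-variable Alexander polynomial of the 2-bridge link $K(s)$ (oriented as in the standard convention) is, up to units $\pm x^iy^j$, $$\Delta_{K(s)}(x,y)=\sum b_{j_1}\cdots b_{j_m}(x-1)^m(y-1)^mG_{\mu_1}\cdots G_{\mu_{m+1}},$$ the sum over all subsets $\{j_1<\dots<j_m\}\subseteq\{1,\dots,N\}$ ($0\le m\le N$), where $\mu_1=a_1+\dots+a_{j_1}$, $\mu_l=a_{j_{l-1}+1}+\dots+a_{j_l}$, and $\mu_{m+1}=a_{j_m+1}+\dots+a_{N+1}$. Here $K(s)$ is the 2-bridge link with rational number having even continued fraction expansion $1/(s_1-1/(s_2-\cdots))$. *)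

theory Defs
  imports Complex_Main
begin

text \<open>The polynomial G_m(x,y) = (x^m - y^m)/(x - y) for m > 0, written out as the
  polynomial sum x^(m-1) + x^(m-2) y + ... + y^(m-1); G_0 = 0;
  G_(-m) = -(xy)^(-m) G_m for m > 0.\<close>
definition Gpos :: "nat \<Rightarrow> complex \<Rightarrow> complex \<Rightarrow> complex" where
  "Gpos m x y = (\<Sum>i<m. x ^ i * y ^ (m - 1 - i))"

definition G :: "int \<Rightarrow> complex \<Rightarrow> complex \<Rightarrow> complex" where
  "G m x y = (if m > 0 then Gpos (nat m) x y
              else if m = 0 then 0
              else - ((x * y) powi m) * Gpos (nat (- m)) x y)"

text \<open>Two-variable Alexander polynomial (up to units) of K(s), given by the
  parameters a_1..a_(N+1), b_1..b_N of s = [2a_1,2b_1,...,2a_N,2b_N,2a_(N+1)].\<close>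
definition alex_ab :: "nat \<Rightarrow> (nat \<Rightarrow> int) \<Rightarrow> (nat \<Rightarrow> int) \<Rightarrow> complex \<Rightarrow> complex \<Rightarrow> complex" where
  "alex_ab N a b x y =
    (\<Sum>J\<in>Pow {1..N}.
       let bs = 0 # sorted_list_of_set J @ [N + 1];
           mu = (\<lambda>l. \<Sum>t\<in>{bs ! (l - 1) + 1 .. bs ! l}. a t)
       in (\<Prod>j\<in>J. of_int (b j)) * ((x - 1) * (y - 1)) ^ card J
          * (\<Prod>l\<in>{1..card J + 1}. G (mu l) x y))"

definition alex :: "int list \<Rightarrow> complex \<Rightarrow> complex \<Rightarrow> complex" where
  "alex s x y = alex_ab (length s div 2) (\<lambda>i. s ! (2 * i - 2) div 2)
                        (\<lambda>i. s ! (2 * i - 1) div 2) x y"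

fun cf :: "int list \<Rightarrow> rat" where
  "cf [] = 0"
| "cf (c # cs) = 1 / (of_int c - cf cs)"

text \<open>K(s) is the 2-bridge link S(alpha, beta) with beta/alpha = cf s in lowest terms;
  it is a 2-component link iff alpha is even.\<close>
definition two_component :: "int list \<Rightarrow> bool" where
  "two_component s \<longleftrightarrow> even (snd (quotient_of (cf s)))"

definition seq_ab :: "nat \<Rightarrow> (nat \<Rightarrow> int) \<Rightarrow> (nat \<Rightarrow> int) \<Rightarrow> int list" where
  "seq_ab n a b = concat (map (\<lambda>i. [2 * a i, 2 * b i]) [1..<n + 1]) @ [2 * a (n + 1)]"

end

theory Submission
  imports Defs
begin


lemma Gpos_0[simp]: "Gpos 0 x y = 0" by (simp add: Gpos_def)

lemma Gpos_Suc1: "Gpos (Suc p) x y = x * Gpos p x y + y ^ p"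
proof -
  have "Gpos (Suc p) x y = (\<Sum>i<Suc p. x ^ i * y ^ (Suc p - 1 - i))" by (simp add: Gpos_def)
  also have "\<dots> = y ^ p + (\<Sum>i<p. x ^ Suc i * y ^ (p - Suc i))"
    by (subst sum.lessThan_Suc_shift) simp
  also have "(\<Sum>i<p. x ^ Suc i * y ^ (p - Suc i)) = x * Gpos p x y"
    by (simp add: Gpos_def sum_distrib_left mult.assoc)
  finally show ?thesis by simp
qed

lemma Gpos_Suc2: "Gpos (Suc p) x y = y * Gpos p x y + x ^ p"
proof -
  have "Gpos (Suc p) x y = (\<Sum>i<p. x ^ i * y ^ (p - i)) + x ^ p" by (simp add: Gpos_def)
  also have "(\<Sum>i<p. x ^ i * y ^ (p - i)) = y * Gpos p x y"
    unfolding Gpos_def sum_distrib_left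
    by (rule sum.cong) (auto simp: Suc_diff_Suc power_Suc[symmetric] mult.left_commute simp del: power_Suc)
  finally show ?thesis by simp
qed

lemma G_neg: "G (- int (Suc p)) x y = - inverse ((x*y)^Suc p) * Gpos (Suc p) x y"
proof -
  have e: "\<not> (- int (Suc p) > 0)" "- int (Suc p) \<noteq> 0" "nat (- (- int (Suc p))) = Suc p"
    by simp_all
  have "G (- int (Suc p)) x y = - ((x*y) powi (- int (Suc p))) * Gpos (Suc p) x y"
    by (simp only: G_def if_not_P[OF e(1)] if_not_P[OF e(2)] e(3))
  also have "(x*y) powi (- int (Suc p)) = inverse ((x*y)^Suc p)"
    by (simp only: power_int_minus power_int_of_nat)
  finally show ?thesis .
qed

lemma G_step:
  assumes x: "x \<noteq> 0" and y: "y \<noteq> 0"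
  shows "G (m + 1) x y = x * G m x y + y powi m"
proof (cases "m \<ge> 0")
  case True
  then obtain p where p: "m = int p" by (metis nonneg_int_cases)
  have "nat (int p + 1) = Suc p" by simp
  then show ?thesis using p by (cases "p = 0") (simp_all add: G_def Gpos_Suc1)
next
  case False
  define p where "p = nat (- m - 1)"
  have p: "m = - int (Suc p)" using False by (simp add: p_def)
  show ?thesis
  proof (cases p)
    case 0
    then show ?thesis using p x y by (simp add: G_def Gpos_def power_int_minus field_simps)
  next
    case (Suc q)
    have e1: "m + 1 = - int (Suc q)" using p Suc by simp
    have "G (m+1) x y = - inverse ((x*y)^Suc q) * Gpos (Suc q) x y"
      unfolding e1 by (rule G_neg)
    moreover have "G m x y = - inverse ((x*y)^Suc (Suc q)) * Gpos (Suc (Suc q)) x y"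
      unfolding p Suc by (rule G_neg)
    moreover have "y powi m = inverse (y ^ Suc (Suc q))" unfolding p Suc by (simp only: power_int_minus power_int_of_nat)
    moreover
    have key: "- inverse ((x*y)^Suc q) * Gpos (Suc q) x y = x * (- inverse ((x*y)^Suc (Suc q)) * Gpos (Suc (Suc q)) x y) + inverse (y ^ Suc (Suc q))"
    proof -
      define g where "g = Gpos (Suc q) x y"
      define w where "w = x * y"
      have w0: "w \<noteq> 0" using x y by (simp add: w_def)
      have "x * (- inverse ((x*y)^Suc (Suc q)) * Gpos (Suc (Suc q)) x y) + inverse (y ^ Suc (Suc q))
          = - (x * y * g + x * x ^ Suc q) / (w * w ^ Suc q) + 1 / (y * y ^ Suc q)"
        using x y by (simp add: Gpos_Suc2[of "Suc q"] g_def w_def field_simps)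
      also have "\<dots> = - g / w ^ Suc q"
        using x y w0 by (simp add: w_def field_simps power_mult_distrib)
      finally show ?thesis
        by (simp add: w_def g_def divide_inverse)
    qed
    ultimately show ?thesis by simp
  qed
qed

lemma G_zero[simp]: "G 0 x y = 0" by (simp add: G_def)

lemma G_add:
  assumes x: "x \<noteq> 0" and y: "y \<noteq> 0"
  shows "G (u + v) x y = x powi u * G v x y + y powi v * G u x y"
proof (induction u rule: int_induct[where k=0])
  case base
  then show ?case by simp
next
  case (step1 i)
  have "G (i + 1 + v) x y = G ((i + v) + 1) x y" by (simp add: algebra_simps)
  also have "\<dots> = x * G (i+v) x y + y powi (i+v)" by (rule G_step[OF x y])
  also have "\<dots> = x * (x powi i * G v x y + y powi v * G i x y) + y powi (i+v)" using step1 by simp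
  also have "\<dots> = x powi (i+1) * G v x y + y powi v * (x * G i x y + y powi i)"
    using x y by (simp add: power_int_add algebra_simps)
  also have "x * G i x y + y powi i = G (i+1) x y" by (rule G_step[OF x y, symmetric])
  finally show ?case .
next
  case (step2 i)
  have h1: "G (i + v) x y = x * G (i - 1 + v) x y + y powi (i - 1 + v)"
    using G_step[OF x y, of "i - 1 + v"] by (simp add: algebra_simps)
  have h2: "G i x y = x * G (i - 1) x y + y powi (i - 1)"
    using G_step[OF x y, of "i - 1"] by simp
  have xi: "x powi i = x * x powi (i - 1)"
    using power_int_add[of x 1 "i - 1"] x by simp
  have yi: "y powi (i - 1 + v) = y powi v * y powi (i - 1)"
    using power_int_add[of y v "i - 1"] y by (simp add: add.commute)
  have "x * G (i - 1 + v) x y = x * (x powi (i - 1) * G v x y + y powi v * G (i - 1) x y)"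
    using step2(2) h1 h2 xi yi by (simp add: algebra_simps)
  then show ?case using x by simp
qed



type_synonym m2 = "complex \<times> complex \<times> complex \<times> complex"

fun mm :: "m2 \<Rightarrow> m2 \<Rightarrow> m2" where
  "mm (a,b,c,d) (e,f,g,h) = (a*e+b*g, a*f+b*h, c*e+d*g, c*f+d*h)"

fun m12 :: "m2 \<Rightarrow> complex" where "m12 (a,b,c,d) = b"
fun mdet :: "m2 \<Rightarrow> complex" where "mdet (a,b,c,d) = a*d - b*c"

definition I2 :: m2 where "I2 = (1,0,0,1)"
definition TT :: "complex \<Rightarrow> complex \<Rightarrow> int \<Rightarrow> m2" where
  "TT x y u = (x powi u, G u x y, 0, y powi u)"
definition CC :: "complex \<Rightarrow> m2" where "CC c = (1,0,c,1)"

lemma mm_assoc: "mm (mm A B) C = mm A (mm B C)"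
  by (cases A; cases B; cases C) (simp add: algebra_simps)

lemma mm_I2[simp]: "mm I2 A = A" "mm A I2 = A"
  by (cases A; simp add: I2_def)+

lemma mdet_mm: "mdet (mm A B) = mdet A * mdet B"
  by (cases A; cases B) (simp add: algebra_simps)

lemma TT_add: "x \<noteq> 0 \<Longrightarrow> y \<noteq> 0 \<Longrightarrow> mm (TT x y u) (TT x y v) = TT x y (u + v)"
  by (simp add: TT_def G_add power_int_add algebra_simps)

lemma TT_0: "TT x y 0 = I2" by (simp add: TT_def I2_def)

lemma TT_inv: "x \<noteq> 0 \<Longrightarrow> y \<noteq> 0 \<Longrightarrow> mm (TT x y (-u)) (TT x y u) = I2"
  by (simp add: TT_add TT_0)

lemma CC_inv: "mm (CC (-c)) (CC c) = I2" by (simp add: CC_def I2_def)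

lemma mdet_TT: "x \<noteq> 0 \<Longrightarrow> y \<noteq> 0 \<Longrightarrow> mdet (TT x y u) = (x*y) powi u"
  by (simp add: TT_def power_int_mult_distrib)

lemma mdet_CC: "mdet (CC c) = 1" by (simp add: CC_def)

fun Lm :: "complex \<Rightarrow> complex \<Rightarrow> nat \<Rightarrow> (nat \<Rightarrow> int) \<Rightarrow> (nat \<Rightarrow> int) \<Rightarrow> m2" where
  "Lm x y 0 a b = TT x y (a 1)"
| "Lm x y (Suc N) a b = mm (TT x y (a (N+2))) (mm (CC ((x-1)*(y-1)*of_int (b (Suc N)))) (Lm x y N a b))"

lemma Lm_cong: "(\<forall>i\<in>{1..N+1}. a i = a' i) \<Longrightarrow> (\<forall>i\<in>{1..N}. b i = b' i) \<Longrightarrow> Lm x y N a b = Lm x y N a' b'"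
  by (induction N) auto

lemma Lm_split: "Lm x y (M + Suc N) a b = mm (Lm x y N (\<lambda>i. a (i+M+1)) (\<lambda>i. b (i+M+1)))
     (mm (CC ((x-1)*(y-1)*of_int (b (M+1)))) (Lm x y M a b))"
proof (induction N)
  case 0
  then show ?case by (simp add: add.commute)
next
  case (Suc N)
  have "Lm x y (M + Suc (Suc N)) a b = Lm x y (Suc (M + Suc N)) a b" by simp
  also have "\<dots> = mm (TT x y (a (M + Suc N + 2))) (mm (CC ((x-1)*(y-1)*of_int (b (Suc (M + Suc N))))) (Lm x y (M + Suc N) a b))"
    by simp
  also note Suc
  finally show ?case by (simp add: mm_assoc algebra_simps)
qed

lemma Lm_det: "x \<noteq> 0 \<Longrightarrow> y \<noteq> 0 \<Longrightarrow> mdet (Lm x y n a b) = (x*y) powi (\<Sum>i\<in>{1..n+1}. a i)"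
proof (induction n)
  case 0
  then show ?case by (simp add: mdet_TT)
next
  case (Suc n)
  then show ?case
    by (simp add: mdet_mm mdet_TT mdet_CC power_int_add add.commute)
qed

lemma Lm_inv:
  assumes x: "x \<noteq> 0" and y: "y \<noteq> 0"
  shows "(\<forall>i\<in>{1..n+1}. a' i = - a (n+2-i)) \<Longrightarrow> (\<forall>i\<in>{1..n}. b' i = - b (n+1-i)) \<Longrightarrow>
    mm (Lm x y n a' b') (Lm x y n a b) = I2"
proof (induction n arbitrary: a' b')
  case 0
  then show ?case using TT_inv[OF x y] by simp
next
  case (Suc n)
  have sp: "Lm x y (0 + Suc n) a' b' = mm (Lm x y n (\<lambda>i. a' (i+0+1)) (\<lambda>i. b' (i+0+1)))
     (mm (CC ((x-1)*(y-1)*of_int (b' (0+1)))) (Lm x y 0 a' b'))" by (rule Lm_split)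
  have ih: "mm (Lm x y n (\<lambda>i. a' (i+0+1)) (\<lambda>i. b' (i+0+1))) (Lm x y n a b) = I2"
    apply (rule Suc.IH)
    using Suc.prems by (auto simp: Suc_diff_Suc)
  have a1: "a' 1 = - a (n+2)" using Suc.prems(1) by auto
  have b1: "b' 1 = - b (n+1)" using Suc.prems(2) by auto
  have "mm (Lm x y (Suc n) a' b') (Lm x y (Suc n) a b) =
    mm (Lm x y n (\<lambda>i. a' (i+0+1)) (\<lambda>i. b' (i+0+1)))
      (mm (mm (CC (- ((x-1)*(y-1)*of_int (b (Suc n))))) (mm (mm (TT x y (- a (n+2))) (TT x y (a (n+2))))
         (CC ((x-1)*(y-1)*of_int (b (Suc n)))))) (Lm x y n a b))"
    using sp a1 b1 by (simp add: mm_assoc)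
  also have "\<dots> = I2" using ih by (simp add: TT_inv[OF x y] CC_inv)
  finally show ?case .
qed

lemma Lm_merge:
  assumes x: "x \<noteq> 0" and y: "y \<noteq> 0"
  shows "Lm x y N (a(Suc N := a (Suc N) + a (Suc (Suc N)))) b = mm (TT x y (a (Suc (Suc N)))) (Lm x y N a b)"
proof (cases N)
  case 0
  then show ?thesis by (simp add: TT_add[OF x y] add.commute)
next
  case (Suc M)
  have "Lm x y M (a(Suc N := a (Suc N) + a (Suc (Suc N)))) b = Lm x y M a b"
    by (rule Lm_cong) (auto simp: Suc)
  then show ?thesis using Suc by (simp add: TT_add[OF x y] mm_assoc[symmetric] add.commute)
qed



definition prodG :: "nat list \<Rightarrow> (nat \<Rightarrow> int) \<Rightarrow> complex \<Rightarrow> complex \<Rightarrow> complex" where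
  "prodG bs a x y = (\<Prod>l\<in>{1..length bs - 1}. G (\<Sum>t\<in>{bs!(l-1)+1..bs!l}. a t) x y)"

definition aterm :: "nat \<Rightarrow> (nat \<Rightarrow> int) \<Rightarrow> (nat \<Rightarrow> int) \<Rightarrow> complex \<Rightarrow> complex \<Rightarrow> nat set \<Rightarrow> complex" where
  "aterm N a b x y J = (\<Prod>j\<in>J. of_int (b j)) * ((x - 1) * (y - 1)) ^ card J
      * prodG (0 # sorted_list_of_set J @ [N+1]) a x y"

lemma alex_ab_alt: "alex_ab N a b x y = (\<Sum>J\<in>Pow {1..N}. aterm N a b x y J)"
  unfolding alex_ab_def
proof (rule sum.cong)
  fix J assume "J \<in> Pow {1..N}"
  then have "finite J" by (auto intro: finite_subset)
  then show "(let bs = 0 # sorted_list_of_set J @ [N + 1]; mu = \<lambda>l. \<Sum>t = bs ! (l - 1) + 1..bs ! l. a t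
          in (\<Prod>j\<in>J. complex_of_int (b j)) * ((x - 1) * (y - 1)) ^ card J * (\<Prod>l = 1..card J + 1. G (mu l) x y)) =
         aterm N a b x y J"
    by (simp add: aterm_def prodG_def Let_def)
qed simp

lemma prodG_snoc:
  assumes "bs \<noteq> []"
  shows "prodG (bs @ [v]) a x y = prodG bs a x y * G (\<Sum>t\<in>{last bs+1..v}. a t) x y"
proof -
  obtain m where m: "length bs = Suc m" using assms by (cases bs) auto
  have "prodG (bs @ [v]) a x y = (\<Prod>l\<in>{1..Suc m}. G (\<Sum>t\<in>{(bs @ [v])!(l-1)+1..(bs @ [v])!l}. a t) x y)"
    by (simp add: prodG_def m)
  also have "\<dots> = (\<Prod>l\<in>{1..m}. G (\<Sum>t\<in>{(bs @ [v])!(l-1)+1..(bs @ [v])!l}. a t) x y)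
       * G (\<Sum>t\<in>{(bs @ [v])!m+1..(bs @ [v])!Suc m}. a t) x y"
    by (simp add: prod.cl_ivl_Suc)
  also have "(\<Prod>l\<in>{1..m}. G (\<Sum>t\<in>{(bs @ [v])!(l-1)+1..(bs @ [v])!l}. a t) x y) = prodG bs a x y"
    unfolding prodG_def m by (rule prod.cong) (auto simp: nth_append m)
  also have "(bs @ [v])!m = last bs" using m assms by (simp add: nth_append last_conv_nth)
  also have "(bs @ [v])!Suc m = v" using m by (simp add: nth_append)
  finally show ?thesis .
qed

lemma prodG_cong:
  assumes "\<forall>t\<le>M. a t = a' t" and "set bs \<subseteq> {..M}"
  shows "prodG bs a x y = prodG bs a' x y"
  unfolding prodG_def
proof (rule prod.cong[OF refl])
  fix l assume l: "l \<in> {1..length bs - 1}"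
  then have "l < length bs" by auto
  then have "bs ! l \<in> set bs" by (rule nth_mem)
  then have "bs ! l \<le> M" using assms(2) by auto
  then show "G (\<Sum>t\<in>{bs!(l-1)+1..bs!l}. a t) x y = G (\<Sum>t\<in>{bs!(l-1)+1..bs!l}. a' t) x y"
    using assms(1) by (metis (no_types, lifting) atLeastAtMost_iff le_trans sum.cong)
qed

lemma sorted_insert_max:
  assumes "J \<subseteq> {1..N}"
  shows "sorted_list_of_set (insert (Suc N) J) = sorted_list_of_set J @ [Suc N]"
proof -
  have f: "finite J" using assms by (auto intro: finite_subset)
  have nJ: "Suc N \<notin> J" using assms by auto
  have "sorted_list_of_set (insert (Suc N) J) = insort (Suc N) (sorted_list_of_set J)"
    using f nJ by (simp add: sorted_list_of_set_insert)
  also have "\<dots> = sorted_list_of_set J @ [Suc N]"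
    by (rule sorted_insort_is_snoc) (use f assms in auto)
  finally show ?thesis .
qed

lemma alex_ab_0: "alex_ab 0 a b x y = G (a 1) x y"
  by (simp add: alex_ab_alt aterm_def prodG_def)

lemma alex_ab_Suc:
  "alex_ab (Suc N) a b x y = alex_ab N (a(Suc N := a (Suc N) + a (Suc (Suc N)))) b x y
     + of_int (b (Suc N)) * ((x-1)*(y-1)) * G (a (Suc (Suc N))) x y * alex_ab N a b x y"
proof -
  define a' where "a' = a(Suc N := a (Suc N) + a (Suc (Suc N)))"
  have P: "Pow {1..Suc N} = Pow {1..N} \<union> insert (Suc N) ` Pow {1..N}"
    by (simp add: atLeastAtMostSuc_conv Pow_insert)
  have disj: "Pow {1..N} \<inter> insert (Suc N) ` Pow {1..N} = {}" by auto
  have inj: "inj_on (insert (Suc N)) (Pow {1..N})"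
    unfolding inj_on_def by (metis PowD atLeastAtMost_iff insert_ident not_less_eq_eq order_refl subsetD)
  have s1: "aterm (Suc N) a b x y J = aterm N a' b x y J" if J: "J \<in> Pow {1..N}" for J
  proof -
    have f: "finite J" using J by (auto intro: finite_subset)
    define B where "B = 0 # sorted_list_of_set J"
    have Bs: "set B \<subseteq> {..N}" using J f by (auto simp: B_def)
    have e: "last B \<le> N" using Bs by (metis B_def last_in_set list.distinct(1) atMost_iff subsetD)
    have c: "prodG B a x y = prodG B a' x y" by (rule prodG_cong[OF _ Bs]) (simp add: a'_def)
    have "(\<Sum>t\<in>{last B+1..Suc N + 1}. a t) = (\<Sum>t\<in>{last B+1..N}. a t) + a (Suc N) + a (Suc (Suc N))"
      using e by (simp add: sum.cl_ivl_Suc)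
    moreover have "(\<Sum>t\<in>{last B+1..N+1}. a' t) = (\<Sum>t\<in>{last B+1..N}. a' t) + a' (Suc N)"
      using e by (simp add: sum.cl_ivl_Suc)
    moreover have "(\<Sum>t\<in>{last B+1..N}. a' t) = (\<Sum>t\<in>{last B+1..N}. a t)"
      by (rule sum.cong) (auto simp: a'_def)
    ultimately have "(\<Sum>t\<in>{last B+1..Suc N + 1}. a t) = (\<Sum>t\<in>{last B+1..N+1}. a' t)"
      by (simp add: a'_def)
    then show ?thesis
      unfolding aterm_def using prodG_snoc[of B "Suc N + 1" a x y] prodG_snoc[of B "N + 1" a' x y] c
      by (simp add: B_def)
  qed
  have s2: "aterm (Suc N) a b x y (insert (Suc N) J) =
       of_int (b (Suc N)) * ((x-1)*(y-1)) * G (a (Suc (Suc N))) x y * aterm N a b x y J"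
    if J: "J \<in> Pow {1..N}" for J
  proof -
    have f: "finite J" using J by (auto intro: finite_subset)
    have nJ: "Suc N \<notin> J" using J by auto
    have so: "sorted_list_of_set (insert (Suc N) J) = sorted_list_of_set J @ [Suc N]"
      using J by (simp add: sorted_insert_max)
    have "prodG ((0 # sorted_list_of_set J @ [Suc N]) @ [Suc N + 1]) a x y
        = prodG (0 # sorted_list_of_set J @ [Suc N]) a x y * G (a (Suc (Suc N))) x y"
      by (subst prodG_snoc) simp_all
    then show ?thesis
      unfolding aterm_def using f nJ so by (simp add: algebra_simps)
  qed
  have "alex_ab (Suc N) a b x y = (\<Sum>J\<in>Pow {1..N}. aterm (Suc N) a b x y J)
       + (\<Sum>J\<in>insert (Suc N) ` Pow {1..N}. aterm (Suc N) a b x y J)"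
    unfolding alex_ab_alt P by (rule sum.union_disjoint) (use disj in auto)
  also have "(\<Sum>J\<in>Pow {1..N}. aterm (Suc N) a b x y J) = alex_ab N a' b x y"
    unfolding alex_ab_alt by (rule sum.cong) (simp_all add: s1)
  also have "(\<Sum>J\<in>insert (Suc N) ` Pow {1..N}. aterm (Suc N) a b x y J)
      = (\<Sum>J\<in>Pow {1..N}. aterm (Suc N) a b x y (insert (Suc N) J))"
    by (rule sum.reindex[OF inj, unfolded comp_def])
  also have "\<dots> = of_int (b (Suc N)) * ((x-1)*(y-1)) * G (a (Suc (Suc N))) x y * alex_ab N a b x y"
    unfolding alex_ab_alt sum_distrib_left by (rule sum.cong) (simp_all add: s2)
  finally show ?thesis unfolding a'_def .
qed

lemma alex_ab_Lm:
  assumes x: "x \<noteq> 0" and y: "y \<noteq> 0"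
  shows "alex_ab N a b x y = m12 (Lm x y N a b)"
proof (induction N arbitrary: a)
  case 0
  then show ?case by (simp add: alex_ab_0 TT_def)
next
  case (Suc N)
  obtain p q r s where L: "Lm x y N a b = (p,q,r,s)" by (cases "Lm x y N a b") auto
  have i1: "alex_ab N (a(Suc N := a (Suc N) + a (Suc (Suc N)))) b x y
     = m12 (mm (TT x y (a (Suc (Suc N)))) (Lm x y N a b))"
    using Suc.IH[of "a(Suc N := a (Suc N) + a (Suc (Suc N)))"] by (simp only: Lm_merge[OF x y])
  have i2: "alex_ab N a b x y = m12 (Lm x y N a b)" by (rule Suc.IH)
  have "alex_ab (Suc N) a b x y = m12 (mm (TT x y (a (Suc (Suc N)))) (Lm x y N a b))
     + of_int (b (Suc N)) * ((x-1)*(y-1)) * G (a (Suc (Suc N))) x y * m12 (Lm x y N a b)"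
    by (simp only: alex_ab_Suc i1 i2)
  also have "\<dots> = m12 (Lm x y (Suc N) a b)"
    by (simp add: L TT_def CC_def algebra_simps numeral_2_eq_2)
  finally show ?case .
qed




lemma cf_repr:
  "(\<forall>c\<in>set l. even c \<and> c \<noteq> 0) \<Longrightarrow> \<exists>p q. cf l = of_int p / of_int q \<and> coprime p q \<and> \<bar>p\<bar> < \<bar>q\<bar>
     \<and> (even q \<longleftrightarrow> odd (length l)) \<and> (even p \<longleftrightarrow> even (length l))"
proof (induction l)
  case Nil
  show ?case by (rule exI[of _ 0], rule exI[of _ 1]) simp
next
  case (Cons c cs)
  then obtain p q where pq: "cf cs = of_int p / of_int q" "coprime p q" "\<bar>p\<bar> < \<bar>q\<bar>"
    "even q \<longleftrightarrow> odd (length cs)" "even p \<longleftrightarrow> even (length cs)" by auto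
  have c: "even c" "c \<noteq> 0" using Cons.prems by auto
  have q0: "q \<noteq> 0" using pq(3) by auto
  have ac: "\<bar>c\<bar> \<ge> 2"
  proof -
    obtain d where d: "c = 2 * d" using c(1) by blast
    then have "d \<noteq> 0" using c(2) by simp
    then have "\<bar>d\<bar> \<ge> 1" by linarith
    then show ?thesis using d by (simp add: abs_mult)
  qed
  have "\<bar>c * q\<bar> \<ge> 2 * \<bar>q\<bar>" using ac by (simp add: abs_mult mult_right_mono)
  then have big: "\<bar>q\<bar> < \<bar>c * q - p\<bar>" using pq(3) by linarith
  then have d0: "c * q - p \<noteq> 0" by auto
  have "cf (c # cs) = 1 / (of_int c - of_int p / of_int q)" using pq(1) by simp
  also have "\<dots> = of_int q / of_int (c * q - p)"
    using q0 d0 by (simp add: field_simps)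
  finally have e: "cf (c # cs) = of_int q / of_int (c * q - p)" .
  have cop: "coprime q (c * q - p)"
  proof -
    have "gcd q (c * q + (- p)) = gcd q (- p)" by (rule gcd_add_mult)
    then have "gcd q (c * q - p) = gcd q p" by simp
    then show ?thesis using pq(2) by (simp add: coprime_iff_gcd_eq_1 gcd.commute)
  qed
  have par: "even (c * q - p) \<longleftrightarrow> even p" using c(1) by simp
  show ?case
    by (rule exI[of _ q], rule exI[of _ "c * q - p"]) (use e cop big par pq(4,5) in auto)
qed

lemma two_component_crit:
  assumes "\<forall>c\<in>set l. even c \<and> c \<noteq> 0" and "odd (length l)"
  shows "two_component l"
proof -
  obtain p q where pq: "cf l = of_int p / of_int q" "coprime p q" "\<bar>p\<bar> < \<bar>q\<bar>"
    "even q \<longleftrightarrow> odd (length l)" using cf_repr[OF assms(1)] by blast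
  obtain P Q where PQ: "quotient_of (cf l) = (P, Q)" by (cases "quotient_of (cf l)") auto
  have Q0: "Q > 0" using PQ quotient_of_denom_pos by blast
  have cPQ: "coprime P Q" using PQ quotient_of_coprime by blast
  have cfP: "cf l = of_int P / of_int Q" using PQ quotient_of_div by blast
  have q0: "q \<noteq> 0" using pq(3) by auto
  have "(of_int p / of_int q :: rat) = of_int P / of_int Q" using pq(1) cfP by simp
  then have "(of_int (p * Q) :: rat) = of_int (P * q)" using q0 Q0 by (simp add: field_simps)
  then have eq: "p * Q = P * q" by (simp only: of_int_eq_iff)
  have "q dvd p * Q" using eq by simp
  then have "q dvd Q" using pq(2) by (metis coprime_commute coprime_dvd_mult_right_iff)
  moreover have eq2: "even q" using pq(4) assms(2) by simp
  ultimately have "even Q" by (metis dvd_trans)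
  then show ?thesis unfolding two_component_def PQ by simp
qed



definition sf :: "(nat \<Rightarrow> int) \<Rightarrow> (nat \<Rightarrow> int) \<Rightarrow> nat \<Rightarrow> int" where
  "sf a b j = (if even j then 2 * a (j div 2 + 1) else 2 * b (j div 2 + 1))"

lemma concat_sf: "concat (map (\<lambda>i. [2 * a i, 2 * b i]) [1..<n + 1]) = map (sf a b) [0..<2*n]"
proof (induction n)
  case 0
  then show ?case by simp
next
  case (Suc n)
  have "[1..<Suc n + 1] = [1..<n+1] @ [n+1]" by simp
  moreover have "[0..<2 * Suc n] = [0..<2*n] @ [2*n, 2*n+1]" by (simp add: upt_Suc)
  moreover have "sf a b (2*n) = 2 * a (n+1)" "sf a b (2*n+1) = 2 * b (n+1)" by (simp_all add: sf_def)
  ultimately show ?case using Suc by simp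
qed

lemma seq_ab_map: "seq_ab n a b = map (sf a b) [0..<2*n+1]"
  unfolding seq_ab_def concat_sf by (simp add: sf_def)


lemma sf_even: "sf a b (2*m) = 2 * a (m+1)" by (simp add: sf_def)
lemma sf_odd: "sf a b (2*m+1) = 2 * b (m+1)" by (simp add: sf_def)
lemma sf_odd': "sf a b (Suc (2*m)) = 2 * b (m+1)" by (simp add: sf_def)

lemma key_alg:
  assumes "mm (P,Q,R',S') (p,q,r,s) = I2"
  shows "m12 (mm (P,Q,R',S') (mm (CC c) (p,q,r,s))) * (p*s - q*r) = - c * q^2"
proof -
  have e1: "P*p + Q*r = 1" and e2: "P*q + Q*s = 0" using assms by (simp_all add: I2_def)
  have "Q*(p*s - q*r) = p*(P*q+Q*s) - q*(P*p+Q*r)" by (simp add: algebra_simps)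
  also have "\<dots> = - q" using e1 e2 by simp
  finally have e3: "Q*(p*s - q*r) = - q" .
  have "m12 (mm (P,Q,R',S') (mm (CC c) (p,q,r,s))) = (P*q + Q*s) + c*q*Q"
    by (simp add: CC_def algebra_simps)
  also have "\<dots> = c*q*Q" using e2 by simp
  finally have "m12 (mm (P,Q,R',S') (mm (CC c) (p,q,r,s))) * (p*s - q*r) = c*q*(Q*(p*s - q*r))"
    by (simp add: algebra_simps)
  also have "\<dots> = - c * q^2" using e3 by (simp add: power2_eq_square)
  finally show ?thesis .
qed

lemma main_identity:
  fixes n :: nat and a b A B :: "nat \<Rightarrow> int" and k :: int and x y :: complex
  assumes x: "x \<noteq> 0" and y: "y \<noteq> 0"
    and A1: "\<forall>i\<in>{1..n+1}. A i = a i" and B1: "\<forall>i\<in>{1..n}. B i = b i" and Bk: "B (n+1) = k"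
    and A2: "\<forall>i\<in>{1..n+1}. A (i+n+1) = - a (n+2-i)" and B2: "\<forall>i\<in>{1..n}. B (i+n+1) = - b (n+1-i)"
  shows "m12 (Lm x y (n + Suc n) A B) * (x*y) powi (\<Sum>i\<in>{1..n+1}. a i)
     = - ((x-1)*(y-1)*of_int k) * (m12 (Lm x y n a b))^2"
proof -
  define R where "R = Lm x y n (\<lambda>i. A (i+n+1)) (\<lambda>i. B (i+n+1))"
  define L where "L = Lm x y n a b"
  have LA: "Lm x y n A B = L" unfolding L_def by (rule Lm_cong) (use A1 B1 in auto)
  have RL: "mm R L = I2" unfolding R_def L_def by (rule Lm_inv[OF x y]) (use A2 B2 in auto)
  have sp: "Lm x y (n + Suc n) A B = mm R (mm (CC ((x-1)*(y-1)*of_int k)) L)"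
    using Lm_split[of x y n n A B] LA Bk by (simp add: R_def)
  have dL: "mdet L = (x*y) powi (\<Sum>i\<in>{1..n+1}. a i)" unfolding L_def by (rule Lm_det[OF x y])
  obtain P Q R' S' where Rq: "R = (P,Q,R',S')" by (cases R) auto
  obtain p q r s where Lq: "L = (p,q,r,s)" by (cases L) auto
  have "m12 (mm (P,Q,R',S') (mm (CC ((x-1)*(y-1)*of_int k)) (p,q,r,s))) * (p*s - q*r)
     = - ((x-1)*(y-1)*of_int k) * q^2"
    by (rule key_alg) (use RL Rq Lq in simp)
  then show ?thesis using sp dL Rq Lq by (simp add: L_def[symmetric])
qed


theorem theorem16p9:
  fixes n :: nat and a b :: "nat \<Rightarrow> int" and k :: int
  assumes "\<forall>i\<in>{1..n+1}. a i \<noteq> 0"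
      and "\<forall>i\<in>{1..n}. b i \<noteq> 0"
      and "k \<noteq> 0"
  defines "s \<equiv> seq_ab n a b"
  defines "r \<equiv> s @ [2 * k] @ map uminus (rev s)"
  shows "two_component s \<and> two_component r
    \<and> (\<exists>\<epsilon>::int. \<exists>i j :: int. \<epsilon> \<in> {1, -1} \<and>
         (\<forall>x y :: complex. x \<noteq> 0 \<longrightarrow> y \<noteq> 0 \<longrightarrow>
            alex r x y = of_int \<epsilon> * x powi i * y powi j * of_int k * (x - 1) * (y - 1)
                         * (alex s x y) ^ 2))
    \<and> ((\<forall>x y :: complex. Im x > 0 \<longrightarrow> Im y > 0 \<longrightarrow> alex r x y \<noteq> 0)
        \<longleftrightarrow> (\<forall>x y :: complex. Im x > 0 \<longrightarrow> Im y > 0 \<longrightarrow> alex s x y \<noteq> 0))"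
proof -
  have sl: "s = map (sf a b) [0..<2*n+1]" unfolding s_def by (rule seq_ab_map)
  have ls: "length s = 2*n+1" using sl by simp
  have snth: "s ! j = sf a b j" if "j < 2*n+1" for j using that unfolding sl by (simp del: upt_Suc)
  have lr: "length r = 4*n+3" unfolding r_def using ls by simp
  have rnth1: "r ! j = sf a b j" if "j < 2*n+1" for j
    unfolding r_def using that ls snth by (simp add: nth_append)
  have rnth2: "r ! (2*n+1) = 2*k" unfolding r_def using ls by (simp add: nth_append)
  have rnth3: "r ! j = - sf a b (4*n+2-j)" if "2*n+1 < j" "j < 4*n+3" for j
  proof -
    define m where "m = j - 2*n - 2"
    have m: "j = 2*n+1 + Suc m" using that(1) by (simp add: m_def)
    have mlt: "m < 2*n+1" using m that(2) by simp
    have "r ! j = (map uminus (rev s)) ! m" unfolding r_def using ls m by (simp add: nth_append)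
    also have "\<dots> = - (s ! (2*n - m))" using mlt ls by (simp add: rev_nth)
    also have "2*n - m = 4*n+2-j" using m by simp
    also have "s ! (4*n+2-j) = sf a b (4*n+2-j)" using m mlt by (intro snth) simp
    finally show ?thesis .
  qed
  have sfnz: "even (sf a b j) \<and> sf a b j \<noteq> 0" if "j < 2*n+1" for j
  proof (cases "even j")
    case True
    then obtain m where "j = 2*m" by blast
    then show ?thesis using that assms(1) by (simp add: sf_even)
  next
    case False
    then obtain m where m: "j = 2*m+1" using oddE by blast
    then show ?thesis using that assms(2) by (simp add: sf_odd')
  qed
  have es: "\<forall>c\<in>set s. even c \<and> c \<noteq> 0" using sfnz by (auto simp: sl simp del: upt_Suc)
  have er: "\<forall>c\<in>set r. even c \<and> c \<noteq> 0" using es assms(3) by (auto simp: r_def)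
  have tc: "two_component s" "two_component r"
    by (rule two_component_crit; use es er ls lr in simp)+
  define A where "A = (\<lambda>i. r ! (2 * i - 2) div 2)"
  define B where "B = (\<lambda>i. r ! (2 * i - 1) div 2)"
  have alr: "alex r x y = alex_ab (n + Suc n) A B x y" for x y
  proof -
    have ldr: "length r div 2 = n + Suc n" using lr by presburger
    show ?thesis unfolding alex_def A_def B_def by (simp only: ldr)
  qed
  have als: "alex s x y = alex_ab n (\<lambda>i. s ! (2 * i - 2) div 2) (\<lambda>i. s ! (2 * i - 1) div 2) x y" for x y
    unfolding alex_def using ls by simp
  have A1: "\<forall>i\<in>{1..n+1}. A i = a i"
  proof
    fix i assume i: "i \<in> {1..n+1}"
    then obtain m where m: "i = Suc m" by (cases i) auto
    then have "2*i-2 = 2*m" by simp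
    then show "A i = a i" using i m rnth1[of "2*m"] by (simp add: A_def sf_even)
  qed
  have As1: "\<forall>i\<in>{1..n+1}. s ! (2 * i - 2) div 2 = a i"
  proof
    fix i assume i: "i \<in> {1..n+1}"
    then obtain m where m: "i = Suc m" by (cases i) auto
    then have "2*i-2 = 2*m" by simp
    then show "s ! (2 * i - 2) div 2 = a i" using i m snth[of "2*m"] by (simp add: sf_even)
  qed
  have B1: "\<forall>i\<in>{1..n}. B i = b i"
  proof
    fix i assume i: "i \<in> {1..n}"
    then obtain m where m: "i = Suc m" by (cases i) auto
    then have "2*i-1 = 2*m+1" by simp
    then show "B i = b i" using i m rnth1[of "2*m+1"] by (simp add: B_def sf_odd sf_odd')
  qed
  have Bs1: "\<forall>i\<in>{1..n}. s ! (2 * i - 1) div 2 = b i"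
  proof
    fix i assume i: "i \<in> {1..n}"
    then obtain m where m: "i = Suc m" by (cases i) auto
    then have "2*i-1 = 2*m+1" by simp
    then show "s ! (2 * i - 1) div 2 = b i" using i m snth[of "2*m+1"] by (simp add: sf_odd sf_odd')
  qed
  have Bk: "B (n+1) = k"
  proof -
    have "2*(n+1) - 1 = 2*n+1" by simp
    then show ?thesis using rnth2 by (simp add: B_def)
  qed
  have A2: "\<forall>i\<in>{1..n+1}. A (i+n+1) = - a (n+2-i)"
  proof
    fix i assume i: "i \<in> {1..n+1}"
    have e1: "2*(i+n+1)-2 = 2*n+2*i" by simp
    have e2: "4*n+2-(2*n+2*i) = 2*(n+1-i)" using i by auto
    have e3: "n+1-i+1 = n+2-i" using i by auto
    have "r ! (2*n+2*i) = - sf a b (2*(n+1-i))" using rnth3[of "2*n+2*i"] i e2 by auto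
    moreover have "A (i+n+1) = r ! (2*n+2*i) div 2" by (simp only: A_def e1)
    ultimately show "A (i+n+1) = - a (n+2-i)" using e3 by (simp add: sf_even)
  qed
  have B2: "\<forall>i\<in>{1..n}. B (i+n+1) = - b (n+1-i)"
  proof
    fix i assume i: "i \<in> {1..n}"
    have e1: "2*(i+n+1)-1 = 2*n+2*i+1" by simp
    have e2: "4*n+2-(2*n+2*i+1) = 2*(n-i)+1" using i by auto
    have e3: "n-i+1 = n+1-i" using i by auto
    have "r ! (2*n+2*i+1) = - sf a b (2*(n-i)+1)" using rnth3[of "2*n+2*i+1"] i e2 by auto
    moreover have "B (i+n+1) = r ! (2*n+2*i+1) div 2" by (simp only: B_def e1)
    ultimately show "B (i+n+1) = - b (n+1-i)" using e3 by (simp add: sf_odd sf_odd')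
  qed
  define S where "S = (\<Sum>i\<in>{1..n+1}. a i)"
  have formula: "alex r x y = of_int (-1) * x powi (-S) * y powi (-S) * of_int k * (x - 1) * (y - 1) * (alex s x y) ^ 2"
    if x: "x \<noteq> 0" and y: "y \<noteq> 0" for x y
  proof -
    have s': "alex s x y = m12 (Lm x y n a b)"
      unfolding als alex_ab_Lm[OF x y] by (rule arg_cong[where f=m12], rule Lm_cong) (use As1 Bs1 in auto)
    have r': "alex r x y = m12 (Lm x y (n + Suc n) A B)" unfolding alr by (rule alex_ab_Lm[OF x y])
    have mi: "alex r x y * (x*y) powi S = - ((x-1)*(y-1)*of_int k) * (alex s x y)^2"
      unfolding r' s' S_def by (rule main_identity[OF x y A1 B1 Bk A2 B2])
    have nz: "(x*y) powi S \<noteq> 0" using x y by simp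
    have inv: "x powi (-S) * y powi (-S) = inverse ((x*y) powi S)"
      by (simp add: power_int_minus power_int_mult_distrib)
    have "alex r x y = - ((x-1)*(y-1)*of_int k) * (alex s x y)^2 * inverse ((x*y) powi S)"
      using mi nz by (simp add: field_simps)
    then show ?thesis by (simp only: mult.assoc inv[symmetric]) (simp add: algebra_simps)
  qed
  have ex: "\<exists>\<epsilon>::int. \<exists>i j :: int. \<epsilon> \<in> {1, -1} \<and>
         (\<forall>x y :: complex. x \<noteq> 0 \<longrightarrow> y \<noteq> 0 \<longrightarrow>
            alex r x y = of_int \<epsilon> * x powi i * y powi j * of_int k * (x - 1) * (y - 1)
                         * (alex s x y) ^ 2)"
    by (rule exI[of _ "-1"], rule exI[of _ "-S"], rule exI[of _ "-S"]) (use formula in simp)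
  have zr: "alex r x y = 0 \<longleftrightarrow> alex s x y = 0" if "Im x > 0" "Im y > 0" for x y
  proof -
    have x: "x \<noteq> 0" "x - 1 \<noteq> 0" and y: "y \<noteq> 0" "y - 1 \<noteq> 0" using that by auto
    show ?thesis using formula[OF x(1) y(1)] x y assms(3) by simp
  qed
  show ?thesis using tc ex zr by blast
qed


end
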